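(* Let $q_1,\dots,q_8$ be the eight points $(\pm1,\pm1,\pm1)$ of $\mathbb{R}^3$, let $t\in(0,1)$ and $q_{j+8}=tq_j$ ($j=1,\dots,8$). Place nonzero mass $\mu_1$ at each vertex $q_1,\dots,q_8$ of the outer cube and nonzero mass $\mu_2$ at each vertex $q_9,\dots,q_{16}$ of the inner cube. There exists $\delta\in(0,1)$ such that: if $t\in(0,\delta)$ and the configuration is central, then $\mu_1$ and $\mu_2$ have the same sign; if $t\in(\delta,1)$ and the configuration is central, then $\mu_1$ and $\mu_2$ have opposite signs.
   Context: A configuration $q=(q_1,\dots,q_N)$ of distinct points in $\mathbb{R}^3$ with masses $m_1,\dots,m_N$ is a central configuration if there exists $c\in\mathbb{R}$ such that $\sum_{j\neq i} m_j\left(\frac{1}{|q_j-q_i|^3}-c\right)(q_j-q_i)=0$ for all $i=1,\dots,N$. *)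

theory Defs
  imports "HOL-Analysis.Analysis"
begin

definition central_config :: "'i set \<Rightarrow> ('i \<Rightarrow> real^3) \<Rightarrow> ('i \<Rightarrow> real) \<Rightarrow> bool" where
  "central_config I q m \<longleftrightarrow> inj_on q I \<and>
     (\<exists>c::real. \<forall>i\<in>I. (\<Sum>j\<in>I - {i}. (m j * (1 / norm (q j - q i) ^ 3 - c)) *\<^sub>R (q j - q i)) = 0)"

text \<open>The eight vertices (+-1,+-1,+-1) of the cube, indexed by 0..7 (binary digits give the signs).\<close>
definition cube_vertex :: "nat \<Rightarrow> real^3" where
  "cube_vertex j = vector [if odd j then -1 else 1,
                           if odd (j div 2) then -1 else 1,
                           if odd (j div 4) then -1 else 1]"

text \<open>Nested cubes: indices 0..7 outer cube q_1..q_8, indices 8..15 inner cube q_9..q_16 = t q_j.\<close>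
definition nested_cubes :: "real \<Rightarrow> nat \<Rightarrow> real^3" where
  "nested_cubes t j = (if j < 8 then cube_vertex j else t *\<^sub>R cube_vertex (j - 8))"

definition nested_masses :: "real \<Rightarrow> real \<Rightarrow> nat \<Rightarrow> real" where
  "nested_masses \<mu>1 \<mu>2 j = (if j < 8 then \<mu>1 else \<mu>2)"

end

theory Submission imports Defs begin


lemma norm3: "norm (x::real^3) = sqrt ((x$1)^2 + (x$2)^2 + (x$3)^2)"
  by (simp add: norm_vec_def L2_set_def sum_3)

lemma sum16: "sum f {0..<16::nat} = f 0 + f 1 + f 2 + f 3 + f 4 + f 5 + f 6 + f 7 + f 8 + f 9 + f 10 + f 11 + f 12 + f 13 + f 14 + f 15"
  by (simp add: eval_nat_numeral)

lemma sum16m: fixes f :: "nat \<Rightarrow> 'a::ab_group_add" shows "i < (16::nat) \<Longrightarrow> sum f ({0..<16::nat} - {i}) = sum f {0..<16} - f i"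
  using sum.remove[of "{0..<16::nat}" i f] by (simp add: algebra_simps)

definition D1 :: "real \<Rightarrow> real" where "D1 t = 3 - 2*t + 3*t^2"
definition D2 :: "real \<Rightarrow> real" where "D2 t = 3 + 2*t + 3*t^2"
definition aa :: real where "aa = 2*(1/8) + 4*(1/(2 * sqrt 2)^3) + 2*(1/(2 * sqrt 3)^3)"
definition B0 :: "real \<Rightarrow> real" where
  "B0 t = (t-1) * (1/(sqrt 3 * (1-t))^3) + (t-3) * (1/sqrt (D1 t)^3) - (t+3) * (1/sqrt (D2 t)^3) - (t+1) * (1/(sqrt 3 * (1+t))^3)"
definition C8 :: "real \<Rightarrow> real" where
  "C8 t = (1-t) * (1/(sqrt 3 * (1-t))^3) + (1-3*t) * (1/sqrt (D1 t)^3) - (1+3*t) * (1/sqrt (D2 t)^3) - (1+t) * (1/(sqrt 3 * (1+t))^3)"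
definition PP :: "real \<Rightarrow> real" where "PP t = t^2 * (C8 t + aa * t)"
definition QQ :: "real \<Rightarrow> real" where "QQ t = aa + t^3 * B0 t"

lemma D1pos: "D1 t > 0"
proof -
  have "0 \<le> (3*t - 1)^2" by simp
  then show ?thesis unfolding D1_def by (simp add: power2_eq_square algebra_simps)
qed
lemma D2pos: "D2 t > 0"
proof -
  have "0 \<le> (3*t + 1)^2" by simp
  then show ?thesis unfolding D2_def by (simp add: power2_eq_square algebra_simps)
qed

lemma reduction:
  fixes t c m1 m2 :: real
  assumes t: "0 < t" "t < 1"
  assumes cc: "central_config {0..<16} (nested_cubes t) (nested_masses m1 m2)"
  shows "m1 * PP t = m2 * QQ t"
proof -
  obtain c where c: "\<forall>i\<in>{0..<16::nat}. (\<Sum>j\<in>{0..<16} - {i}. (nested_masses m1 m2 j * (1 / norm (nested_cubes t j - nested_cubes t i) ^ 3 - c)) *\<^sub>R (nested_cubes t j - nested_cubes t i)) = 0"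
    using cc unfolding central_config_def by blast
  have e0: "(\<Sum>j\<in>{0..<16} - {0}. (nested_masses m1 m2 j * (1 / norm (nested_cubes t j - nested_cubes t 0) ^ 3 - c)) *\<^sub>R (nested_cubes t j - nested_cubes t 0)) $ 1 = 0"
    using c by simp
  have e8: "(\<Sum>j\<in>{0..<16} - {8}. (nested_masses m1 m2 j * (1 / norm (nested_cubes t j - nested_cubes t 8) ^ 3 - c)) *\<^sub>R (nested_cubes t j - nested_cubes t 8)) $ 1 = 0"
    using c by simp
  have sq: "sqrt (3 * (t - 1)\<^sup>2) = sqrt 3 * (1-t)" "sqrt (3 * (1 - t)\<^sup>2) = sqrt 3 * (1-t)"
     "sqrt (3 * (- t - 1)\<^sup>2) = sqrt 3 * (1+t)" "sqrt (3 * (- 1 - t)\<^sup>2) = sqrt 3 * (1+t)"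
     "sqrt (2 * (- t - 1)\<^sup>2 + (t - 1)\<^sup>2) = sqrt (D2 t)"
     "sqrt (2 * (- 1 - t)\<^sup>2 + (1 - t)\<^sup>2) = sqrt (D2 t)"
     "sqrt (2 * (t - 1)\<^sup>2 + (- t - 1)\<^sup>2) = sqrt (D1 t)"
     "sqrt (2 * (1 - t)\<^sup>2 + (- 1 - t)\<^sup>2) = sqrt (D1 t)"
     "sqrt 8 = 2 * sqrt 2" "sqrt 12 = 2 * sqrt 3"
     "sqrt (4 * t\<^sup>2) = 2 * t" "sqrt (8 * t\<^sup>2) = 2 * sqrt 2 * t" "sqrt (12 * t\<^sup>2) = 2 * sqrt 3 * t"
  proof -
    have a1: "2 * (- t - 1)\<^sup>2 + (t - 1)\<^sup>2 = D2 t" "2 * (- 1 - t)\<^sup>2 + (1 - t)\<^sup>2 = D2 t"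
      "2 * (t - 1)\<^sup>2 + (- t - 1)\<^sup>2 = D1 t" "2 * (1 - t)\<^sup>2 + (- 1 - t)\<^sup>2 = D1 t"
      by (simp_all add: D1_def D2_def power2_eq_square algebra_simps)
    have a2: "sqrt 8 = sqrt (2^2 * 2)" "sqrt 12 = sqrt (2^2*3)" by simp_all
    show "sqrt (3 * (t - 1)\<^sup>2) = sqrt 3 * (1-t)" "sqrt (3 * (1 - t)\<^sup>2) = sqrt 3 * (1-t)"
     "sqrt (3 * (- t - 1)\<^sup>2) = sqrt 3 * (1+t)" "sqrt (3 * (- 1 - t)\<^sup>2) = sqrt 3 * (1+t)"
      using t by (simp_all add: real_sqrt_mult abs_if)
    show "sqrt (2 * (- t - 1)\<^sup>2 + (t - 1)\<^sup>2) = sqrt (D2 t)"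
     "sqrt (2 * (- 1 - t)\<^sup>2 + (1 - t)\<^sup>2) = sqrt (D2 t)"
     "sqrt (2 * (t - 1)\<^sup>2 + (- t - 1)\<^sup>2) = sqrt (D1 t)"
     "sqrt (2 * (1 - t)\<^sup>2 + (- 1 - t)\<^sup>2) = sqrt (D1 t)" using a1 by simp_all
    show a3: "sqrt 8 = 2 * sqrt 2" "sqrt 12 = 2 * sqrt 3" unfolding a2 real_sqrt_mult by simp_all
    show "sqrt (4 * t\<^sup>2) = 2 * t" "sqrt (8 * t\<^sup>2) = 2 * sqrt 2 * t" "sqrt (12 * t\<^sup>2) = 2 * sqrt 3 * t"
      using t a3 by (simp_all add: real_sqrt_mult)
  qed
  have p1: "sqrt (D1 t) > 0" "sqrt (D2 t) > 0" using D1pos D2pos by auto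
  have p2: "1 - t \<noteq> 0" "1 + t \<noteq> 0" "t \<noteq> 0" using t by auto
  have E0: "m1*(-aa) + m2*B0 t + 8*c*(m1+m2) = 0"
    using e0 unfolding sum_component sum16m[of 0,simplified] sum16
    apply (simp add: nested_cubes_def nested_masses_def norm3 cube_vertex_def)
    apply (simp only: sq)
    unfolding B0_def aa_def by algebra
  define it where "it = 1/t^3"
  have sc: "1/(2*t)^3 = (1/8) * it" "1/(2 * sqrt 2 * t)^3 = (1/(2 * sqrt 2)^3) * it"
     "1/(2 * sqrt 3 * t)^3 = (1/(2 * sqrt 3)^3) * it"
    by (simp_all add: power_mult_distrib it_def)
  have E8: "m1*C8 t - m2*aa*t*it + 8*c*t*(m1+m2) = 0"
    using e8 unfolding sum_component sum16m[of 8,simplified] sum16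
    apply (simp add: nested_cubes_def nested_masses_def norm3 cube_vertex_def)
    apply (simp only: sq sc)
    unfolding C8_def aa_def by algebra
  have tt: "t^3 * it = 1" using p2 by (simp add: it_def)
  show ?thesis using E0 E8 tt unfolding PP_def QQ_def by algebra
qed


lemma mono_T0: fixes s t :: real assumes "0<s" "s<t" "t<1" shows "s^3/(1-s)^2 < t^3/(1-t)^2"
proof -
  have "0 < s^3" using assms by (intro zero_less_power)
  moreover have "s^3 \<le> t^3" using assms by (simp add: power_mono)
  moreover have "0 < (1-t)^2" using assms by simp
  moreover have "(1-t)^2 < (1-s)^2" using assms by (intro power_strict_mono) auto
  ultimately show ?thesis using frac_less2[of "s^3" "t^3" "(1-t)^2" "(1-s)^2"] by blast
qed

lemma mono_T3: fixes s t :: real assumes "0<s" "s<t" "t<1" shows "s^3/(1+s)^2 < t^3/(1+t)^2"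
proof -
  have e: "x^3/(1+x)^2 = x * (x/(1+x))^2" if "x > 0" for x::real
    using that by (simp add: power2_eq_square power3_eq_cube)
  have "s/(1+s) < t/(1+t)"
  proof -
    have "0<1+s" "0<1+t" "s*(1+t) < t*(1+s)" using assms by (auto simp: algebra_simps)
    then show ?thesis by (simp add: divide_simps)
  qed
  moreover have "0 < s/(1+s)" using assms by simp
  ultimately have "(s/(1+s))^2 < (t/(1+t))^2" by (intro power_strict_mono) auto
  then have "s * (s/(1+s))^2 < t * (t/(1+t))^2"
    using assms \<open>0 < s/(1+s)\<close> by (intro mult_strict_mono) auto
  then show ?thesis using e assms by simp
qed

lemma mono_B2: fixes s t :: real assumes "0<s" "s<t" "t<1" shows "s^2/D2 s < t^2/D2 t"
proof -
  have "s^2 * D2 t < t^2 * D2 s"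
  proof -
    have "s * s < t * t" using assms by (intro mult_strict_mono) auto
    moreover have "s * s * t < t * t * s" using assms by (simp add: mult_strict_left_mono)
    ultimately show ?thesis unfolding D2_def by (simp add: power2_eq_square algebra_simps)
  qed
  then show ?thesis using D2pos[of s] D2pos[of t] by (simp add: divide_simps)
qed

lemma mono_A2: fixes s t :: real assumes "0<s" "s<t" "t<1" shows "s^2*(3+s)/D2 s < t^2*(3+t)/D2 t"
proof -
  have "s^2/D2 s * (3+s) < t^2/D2 t * (3+t)"
    using mono_B2[OF assms] assms D2pos[of s] D2pos[of t] by (intro mult_strict_mono) auto
  then show ?thesis by simp
qed

lemma mono_B1: fixes s t :: real assumes "0<s" "s<t" "t<1" shows "s^2/D1 s < t^2/D1 t"
proof -
  have "s^2 * D1 t < t^2 * D1 s"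
  proof -
    have "t^2 * D1 s - s^2 * D1 t = (t-s) * (3*(t+s) - 2 * s*t)"
      unfolding D1_def by (simp add: power2_eq_square algebra_simps)
    moreover have "s * t < s" using assms by simp
    moreover have "0 < 3*(t+s) - 2*(s*t)" using assms calculation(2) by (smt (verit))
    moreover have "0 < (t-s) * (3*(t+s) - 2 * s*t)" using assms calculation(3) by (intro mult_pos_pos) (auto simp: algebra_simps)
    ultimately show ?thesis by simp
  qed
  then show ?thesis using D1pos[of s] D1pos[of t] by (simp add: divide_simps)
qed

lemma mono_A1: fixes s t :: real assumes "0<s" "s<t" "t<1" shows "s^2*(3-s)/D1 s < t^2*(3-t)/D1 t"
proof -
  have "s^2*(3-s) * D1 t < t^2*(3-t) * D1 s"
  proof -
    have eq: "t^2*(3-t) * D1 s - s^2*(3-s) * D1 t = (t-s) * (9*(t+s) - 3*(t * t+t * s+s * s) - 6 * s*t + 2 * s * t * (t+s) - 3*(s * s)*(t * t))"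
      unfolding D1_def by (simp add: power2_eq_square power3_eq_cube algebra_simps)
    have pos: "0 < 9*(t+s) - 3*(t * t+t * s+s * s) - 6 * s*t + 2 * s * t * (t+s) - 3*(s * s)*(t * t)"
    proof -
      have a: "t * t < t" "s * s < s" "t * s < s" "s * t < s" using assms by auto
      have "t * t < 1" using a assms by linarith
      then have "s * s * (t * t) < s * s * 1" using assms by (intro mult_strict_left_mono) auto
      then have b: "(s * s)*(t * t) < s" using a by linarith
      have c: "0 < s * t * (t+s)" using assms by simp
      have "0 < 9*t + 9* s - 3*(t * t) - 9*(s * t) - 3*(s * s) + 2*(s * t * (t+s)) - 3*((s * s)*(t * t))"
        using a b c assms by (smt (verit))
      then show ?thesis by (simp add: algebra_simps)
    qed
    have "0 < (t-s) * (9*(t+s) - 3*(t * t+t * s+s * s) - 6 * s*t + 2 * s * t * (t+s) - 3*(s * s)*(t * t))"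
      using pos assms by simp
    then show ?thesis using eq by linarith
  qed
  then show ?thesis using D1pos[of s] D1pos[of t] by (simp add: divide_simps)
qed



lemma s3_lo: "1.73 \<le> sqrt (3::real)" by (rule real_le_rsqrt) (simp add: power2_eq_square)
lemma s3_hi: "sqrt (3::real) \<le> 1.7321" by (rule real_le_lsqrt) (simp_all add: power2_eq_square)
lemma s2_hi: "sqrt (2::real) \<le> 1.415" by (rule real_le_lsqrt) (simp_all add: power2_eq_square)
lemma s2_lo: "1.414 \<le> sqrt (2::real)" by (rule real_le_rsqrt) (simp add: power2_eq_square)

lemma aa_eq: "aa = 1/4 + 1/(4 * sqrt 2) + 1/(12 * sqrt 3)"
proof -
  have a: "(2 * sqrt 2)^3 = 16 * sqrt (2::real)" "(2 * sqrt 3)^3 = 24 * sqrt (3::real)"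
    by (simp_all add: power_mult_distrib power3_eq_cube)
  show ?thesis unfolding aa_def a by simp
qed

lemma aa_lo: "0.47 \<le> aa"
proof -
  have "1/(4 * sqrt 2) \<ge> (1::real)/(4*1.415)"
    using s2_hi s2_lo by (intro divide_left_mono) auto
  moreover have "1/(12 * sqrt 3) \<ge> (1::real)/(12*1.7321)"
    using s3_hi s3_lo by (intro divide_left_mono) auto
  ultimately show ?thesis unfolding aa_eq by simp
qed

lemma aa_hi: "aa \<le> 0.48"
proof -
  have "1/(4 * sqrt 2) \<le> (1::real)/(4*1.414)"
    using s2_lo by (intro divide_left_mono) auto
  moreover have "1/(12 * sqrt 3) \<le> (1::real)/(12*1.73)"
    using s3_lo by (intro divide_left_mono) auto
  ultimately show ?thesis unfolding aa_eq by simp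
qed

definition KK :: "real \<Rightarrow> real" where
  "KK t = t^3/(1-t)^2 / (3 * sqrt 3) + t^3/(1+t)^2 / (3 * sqrt 3)
     + (t^2*(3-t)/D1 t) * sqrt (t^2/D1 t) + (t^2*(3+t)/D2 t) * sqrt (t^2/D2 t)"

lemma QQ_eq: assumes "0 < t" "t < 1" shows "QQ t = aa - KK t"
proof -
  have s33: "sqrt 3 ^ 3 = 3 * sqrt (3::real)" by (simp add: power3_eq_cube)
  have p1: "sqrt (D1 t) > 0" "sqrt (D2 t) > 0" "D1 t > 0" "D2 t > 0" using D1pos D2pos by auto
  have q1: "sqrt (t^2/D1 t) = t / sqrt (D1 t)" "sqrt (t^2/D2 t) = t / sqrt (D2 t)"
    using assms by (simp_all add: real_sqrt_divide)
  have c1: "sqrt (D1 t)^3 = D1 t * sqrt (D1 t)" "sqrt (D2 t)^3 = D2 t * sqrt (D2 t)"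
    using p1 by (simp_all add: power3_eq_cube)
  have "t^3 * ((t-1) * (1/(sqrt 3 * (1-t))^3)) = - (t^3/(1-t)^2 / (3 * sqrt 3))"
  proof -
    obtain u where u: "u = 1 - t" by blast
    have e: "t - 1 = - u" "1 - t = u" and nz: "u \<noteq> 0" using u assms by auto
    show ?thesis unfolding e using nz by (simp add: power_mult_distrib s33 power3_eq_cube power2_eq_square field_simps)
  qed
  moreover have "t^3 * ((t+1) * (1/(sqrt 3 * (1+t))^3)) = t^3/(1+t)^2 / (3 * sqrt 3)"
  proof -
    obtain u where u: "u = 1 + t" by blast
    have e: "t + 1 = u" "1 + t = u" and nz: "u \<noteq> 0" using u assms by auto
    show ?thesis unfolding e using nz by (simp add: power_mult_distrib s33 power3_eq_cube power2_eq_square field_simps)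
  qed
  moreover have "t^3 * ((t-3) * (1/sqrt (D1 t)^3)) = - ((t^2*(3-t)/D1 t) * sqrt (t^2/D1 t))"
    unfolding q1 c1 using p1 by (simp add: power3_eq_cube power2_eq_square field_simps)
  moreover have "t^3 * ((t+3) * (1/sqrt (D2 t)^3)) = (t^2*(3+t)/D2 t) * sqrt (t^2/D2 t)"
    unfolding q1 c1 using p1 by (simp add: power3_eq_cube power2_eq_square field_simps)
  ultimately show ?thesis unfolding QQ_def KK_def B0_def by (simp add: algebra_simps)
qed

lemma KK_mono: assumes "0 < s" "s < t" "t < 1" shows "KK s < KK t"
proof -
  have r: "0 < 3 * sqrt (3::real)" by simp
  have a: "s^3/(1-s)^2 / (3 * sqrt 3) < t^3/(1-t)^2 / (3 * sqrt 3)"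
    using divide_strict_right_mono[OF mono_T0[OF assms] r] .
  have b: "s^3/(1+s)^2 / (3 * sqrt 3) < t^3/(1+t)^2 / (3 * sqrt 3)"
    using divide_strict_right_mono[OF mono_T3[OF assms] r] .
  have c: "(s^2*(3-s)/D1 s) * sqrt (s^2/D1 s) < (t^2*(3-t)/D1 t) * sqrt (t^2/D1 t)"
    using mono_A1[OF assms] mono_B1[OF assms] assms D1pos[of s] D1pos[of t]
    by (intro mult_strict_mono) auto
  have d: "(s^2*(3+s)/D2 s) * sqrt (s^2/D2 s) < (t^2*(3+t)/D2 t) * sqrt (t^2/D2 t)"
    using mono_A2[OF assms] mono_B2[OF assms] assms D2pos[of s] D2pos[of t]
    by (intro mult_strict_mono) auto
  show ?thesis unfolding KK_def using a b c d by linarith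
qed

lemma C8_eq: assumes "0 < t" "t < 1"
  shows "C8 t = (1/(1-t)^2/(3 * sqrt 3) - 1/(1+t)^2/(3 * sqrt 3)) + (1-3*t)/(D1 t * sqrt (D1 t)) - (1+3*t)/(D2 t * sqrt (D2 t))"
proof -
  have s33: "sqrt 3 ^ 3 = 3 * sqrt (3::real)" by (simp add: power3_eq_cube)
  have p1: "sqrt (D1 t) > 0" "sqrt (D2 t) > 0" "D1 t > 0" "D2 t > 0" using D1pos D2pos by auto
  have c1: "sqrt (D1 t)^3 = D1 t * sqrt (D1 t)" "sqrt (D2 t)^3 = D2 t * sqrt (D2 t)"
    using p1 by (simp_all add: power3_eq_cube)
  have "(1-t) * (1/(sqrt 3 * (1-t))^3) = 1/(1-t)^2/(3 * sqrt 3)"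
  proof -
    obtain u where u: "u = 1 - t" by blast
    have e: "1 - t = u" and nz: "u \<noteq> 0" using u assms by auto
    show ?thesis unfolding e using nz by (simp add: power_mult_distrib s33 power3_eq_cube power2_eq_square field_simps)
  qed
  moreover have "(1+t) * (1/(sqrt 3 * (1+t))^3) = 1/(1+t)^2/(3 * sqrt 3)"
  proof -
    obtain u where u: "u = 1 + t" by blast
    have e: "1 + t = u" and nz: "u \<noteq> 0" using u assms by auto
    show ?thesis unfolding e using nz by (simp add: power_mult_distrib s33 power3_eq_cube power2_eq_square field_simps)
  qed
  ultimately show ?thesis unfolding C8_def c1 by (simp add: algebra_simps)
qed

lemma PP_pos: assumes t: "0 < t" "t < 1" shows "PP t > 0"
proof -
  define r where "r = sqrt (3::real)"
  have r: "1.73 \<le> r" "r \<le> 1.7321" "0 < r" using s3_lo s3_hi unfolding r_def by auto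
  define X where "X = 1/(1-t)^2/(3 * sqrt 3) - 1/(1+t)^2/(3 * sqrt 3)"
  define Y1 where "Y1 = (1-3*t)/(D1 t * sqrt (D1 t))"
  define Y2 where "Y2 = (1+3*t)/(D2 t * sqrt (D2 t))"
  have p1: "sqrt (D1 t) > 0" "sqrt (D2 t) > 0" "D1 t > 0" "D2 t > 0" using D1pos D2pos by auto
  have hX: "r * X \<ge> 4*t/3"
  proof -
    have den: "0 < (1-t)^2*(1+t)^2" "(1-t)^2*(1+t)^2 \<le> 1"
    proof -
      show "0 < (1-t)^2*(1+t)^2" using t by simp
      have "(1-t)^2*(1+t)^2 = (1-t^2)^2" by (simp add: power2_eq_square algebra_simps)
      moreover have "(1-t^2)^2 \<le> 1^2" using t by (intro power_mono) (auto simp: power2_eq_square mult_le_one)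
      ultimately show "(1-t)^2*(1+t)^2 \<le> 1" by simp
    qed
    have "r * X = (1/(1-t)^2 - 1/(1+t)^2)/3" unfolding X_def r_def by (simp add: field_simps)
    also have "1/(1-t)^2 - 1/(1+t)^2 = 4*t/((1-t)^2*(1+t)^2)"
    proof -
      have "1/(1-t)^2 - 1/(1+t)^2 = (1*(1+t)^2 - 1*(1-t)^2)/((1-t)^2*(1+t)^2)"
        using t by (intro diff_frac_eq) auto
      moreover have "1*(1+t)^2 - 1*(1-t)^2 = 4*t" by (simp add: power2_eq_square algebra_simps)
      ultimately show ?thesis by simp
    qed
    also have "4*t/((1-t)^2*(1+t)^2) \<ge> 4*t" using den t by (simp add: le_divide_eq)
    ultimately show ?thesis by simp
  qed
  have hY2: "r * Y2 \<le> 1/3 + 7*t/9"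
  proof -
    have "3 + 2*t \<le> D2 t" unfolding D2_def by simp
    moreover have "r \<le> sqrt (D2 t)" unfolding r_def using \<open>3 + 2*t \<le> D2 t\<close> t by simp
    ultimately have "(3+2*t) * r \<le> D2 t * sqrt (D2 t)" using t r by (intro mult_mono) auto
    then have "Y2 \<le> (1+3*t)/((3+2*t) * r)" unfolding Y2_def using t r by (intro frac_le) auto
    then have "r * Y2 \<le> r * ((1+3*t)/((3+2*t) * r))" using r by (intro mult_left_mono) auto
    also have "\<dots> = (1+3*t)/(3+2*t)" using r by simp
    also have "\<dots> \<le> 1/3 + 7*t/9"
    proof -
      have e: "(1/3+7*t/9)*(3+2*t) = 1 + 3*t + 14/9*t^2" by (simp add: field_simps power2_eq_square)
      have "0 \<le> t^2" by simp
      then have "1+3*t \<le> (1/3+7*t/9)*(3+2*t)" unfolding e by linarith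
      then show ?thesis using t by (simp add: pos_divide_le_eq)
    qed
    finally show ?thesis .
  qed
  have hA: "aa * t * r \<ge> (8131/10000) * t"
  proof -
    have "0.47 * t \<le> aa * t" using aa_lo t by (simp add: mult_right_mono)
    then have h1: "0.47 * t * r \<le> aa * t * r" by (rule mult_right_mono) (use r in auto)
    have h2: "0.47 * t * 1.73 \<le> 0.47 * t * r" by (rule mult_left_mono) (use r t in auto)
    have "0.47 * t * 1.73 \<le> aa * t * r" using order_trans[OF h2 h1] .
    moreover have "(8131/10000) * t = 0.47 * t * 1.73" by simp
    ultimately show ?thesis by linarith
  qed
  have eq: "r * (C8 t + aa * t) = r * X + r * Y1 - r * Y2 + aa * t * r"
    unfolding C8_eq[OF t] X_def Y1_def Y2_def by (simp add: algebra_simps)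
  have "r * (C8 t + aa * t) > 0"
  proof (cases "t \<le> 1/3")
    case True
    have "D1 t \<le> 3" 
    proof -
      have "t * t \<le> t * (1/3)" using True t by (intro mult_left_mono) auto
      then show ?thesis unfolding D1_def using t by (simp add: power2_eq_square)
    qed
    moreover have "sqrt (D1 t) \<le> r" unfolding r_def using \<open>D1 t \<le> 3\<close> by simp
    ultimately have "D1 t * sqrt (D1 t) \<le> 3 * r" using p1 by (intro mult_mono) auto
    then have "(1-3*t)/(3*r) \<le> Y1" unfolding Y1_def using True p1 by (intro frac_le) auto
    then have "r * ((1-3*t)/(3*r)) \<le> r * Y1" using r by (intro mult_left_mono) auto
    then have "(1-3*t)/3 \<le> r * Y1" using r by simp
    moreover have "(1-3*t)/3 = 1/3 - t" by (simp add: diff_divide_distrib)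
    ultimately have "1/3 - t \<le> r * Y1" by simp
    then show ?thesis unfolding eq using hX hY2 hA t by linarith
  next
    case False
    have "8/3 \<le> D1 t"
    proof -
      have "D1 t - 8/3 = 3*(t-1/3)^2" unfolding D1_def by (simp add: power2_eq_square algebra_simps)
      moreover have "0 \<le> (t-1/3)^2" by simp
      ultimately show ?thesis by linarith
    qed
    moreover have "1.6 \<le> sqrt (D1 t)" using \<open>8/3 \<le> D1 t\<close> by (intro real_le_rsqrt) (simp add: power2_eq_square)
    ultimately have "8/3 * 1.6 \<le> D1 t * sqrt (D1 t)" using p1 by (intro mult_mono) auto
    then have "64/15 \<le> D1 t * sqrt (D1 t)" by simp
    then have "(3*t-1)/(D1 t * sqrt (D1 t)) \<le> (3*t-1)/(64/15)" using False by (intro frac_le) auto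
    moreover have "Y1 = - ((3*t-1)/(D1 t * sqrt (D1 t)))" unfolding Y1_def minus_divide_left by simp
    moreover have "(3*t-1)/(64/15) = 45/64*t - 15/64" by (simp add: field_simps)
    ultimately have y1: "Y1 \<ge> -(45/64*t - 15/64)" by linarith
    define k where "k = 45/64*t - 15/64"
    have k0: "0 \<le> k" unfolding k_def using False by simp
    have "r * Y1 \<ge> r * (- k)" unfolding k_def using y1 r by (intro mult_left_mono) auto
    moreover have "r * k \<le> 1.7321 * k" using r k0 by (intro mult_right_mono) auto
    ultimately have "r * Y1 \<ge> - (17321/10000 * k)" by simp
    moreover have "17321/10000 * k = (779445/640000)*t - 259815/640000" unfolding k_def by (simp add: algebra_simps)
    ultimately have "r * Y1 \<ge> 259815/640000 - (779445/640000)*t" by linarith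
    then show ?thesis unfolding eq using hX hY2 hA t False by linarith
  qed
  then have "C8 t + aa * t > 0" using r by (simp add: zero_less_mult_iff)
  then show ?thesis unfolding PP_def using t by simp
qed

lemma KK_half: "KK (1/2) < aa"
proof -
  have e: "KK (1/2) = 1/(6 * sqrt 3) + 1/(54 * sqrt 3) + 5/22 * sqrt (1/11) + 7/38 * sqrt (1/19)"
    unfolding KK_def D1_def D2_def by (simp add: power2_eq_square power3_eq_cube)
  have a: "1/(6 * sqrt 3) \<le> (1::real)/(6*1.73)" using s3_lo by (intro divide_left_mono) auto
  have b: "1/(54 * sqrt 3) \<le> (1::real)/(54*1.73)" using s3_lo by (intro divide_left_mono) auto
  have c: "sqrt (1/11) \<le> (0.302::real)" by (rule real_le_lsqrt) (simp_all add: power2_eq_square)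
  have d: "sqrt (1/19) \<le> (0.23::real)" by (rule real_le_lsqrt) (simp_all add: power2_eq_square)
  show ?thesis unfolding e using a b c d aa_lo by simp
qed

lemma KK_34: "aa < KK (3/4)"
proof -
  define t :: real where "t = 3/4"
  have t: "0 < t" "t < 1" unfolding t_def by auto
  have p: "0 \<le> t^2*(3-t)/D1 t * sqrt (t^2/D1 t)" "0 \<le> t^2*(3+t)/D2 t * sqrt (t^2/D2 t)"
    using t D1pos[of t] D2pos[of t] by auto
  have q: "0 \<le> t^3/(1+t)^2 / (3 * sqrt 3)" using t by simp
  have e: "t^3/(1-t)^2 / (3 * sqrt 3) = 9/(4 * sqrt 3)" unfolding t_def by (simp add: power2_eq_square power3_eq_cube)
  have a: "6/5 \<le> 9/(4 * sqrt (3::real))" using s3_hi by (simp add: le_divide_eq)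
  have "aa \<le> 12/25" using aa_hi by simp
  then show ?thesis unfolding t_def[symmetric] KK_def using p q e a by linarith
qed
lemma sign_same: fixes m1 m2 P Q :: real
  assumes "m1 * P = m2 * Q" "P > 0" "Q > 0" shows "sgn m1 = sgn m2"
proof -
  have "sgn m1 * sgn P = sgn m2 * sgn Q" using assms(1) by (metis sgn_mult)
  moreover have "sgn P = 1" using assms(2) by simp
  moreover have "sgn Q = (if Q > 0 then 1 else -1)" using assms(3) by auto
  ultimately show ?thesis using assms(3) by (auto split: if_splits)
qed

lemma sign_opp: fixes m1 m2 P Q :: real
  assumes "m1 * P = m2 * Q" "P > 0" "Q < 0" shows "sgn m1 = - sgn m2"
proof -
  have "sgn m1 * sgn P = sgn m2 * sgn Q" using assms(1) by (metis sgn_mult)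
  moreover have "sgn P = 1" using assms(2) by simp
  moreover have "sgn Q = (if Q > 0 then 1 else -1)" using assms(3) by auto
  ultimately show ?thesis using assms(3) by (auto split: if_splits)
qed

theorem theorem11:
  shows "\<exists>\<delta>::real. 0 < \<delta> \<and> \<delta> < 1 \<and>
    (\<forall>t \<mu>1 \<mu>2. \<mu>1 \<noteq> 0 \<longrightarrow> \<mu>2 \<noteq> 0 \<longrightarrow>
       central_config {0..<16} (nested_cubes t) (nested_masses \<mu>1 \<mu>2) \<longrightarrow>
       (0 < t \<and> t < \<delta> \<longrightarrow> sgn \<mu>1 = sgn \<mu>2) \<and>
       (\<delta> < t \<and> t < 1 \<longrightarrow> sgn \<mu>1 = - sgn \<mu>2))"
proof -
  define S where "S = {t. 0 < t \<and> t < 1 \<and> KK t < aa}"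
  define d where "d = Sup S"
  have half: "1/2 \<in> S" unfolding S_def using KK_half by auto
  have bdd: "bdd_above S" unfolding S_def by (rule bdd_aboveI[of _ 1]) auto
  have d_lo: "1/2 \<le> d" unfolding d_def using half bdd by (rule cSup_upper)
  have le34: "x \<le> 3/4" if "x \<in> S" for x
  proof (rule ccontr)
    assume "\<not> x \<le> 3/4"
    then have "KK (3/4) < KK x" using that unfolding S_def by (intro KK_mono) auto
    then show False using KK_34 that unfolding S_def by auto
  qed
  have d_hi: "d \<le> 3/4" unfolding d_def using half le34 by (intro cSup_least) auto
  show ?thesis
  proof (intro exI[of _ d] conjI allI impI)
    show "0 < d" using d_lo by simp
    show "d < 1" using d_hi by simp
    fix t m1 m2 :: real
    assume m: "m1 \<noteq> 0" "m2 \<noteq> 0" and cc: "central_config {0..<16} (nested_cubes t) (nested_masses m1 m2)"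
    {
      assume t: "0 < t \<and> t < d"
      then obtain s where s: "s \<in> S" "t < s" unfolding d_def using less_cSup_iff[of S t] half bdd by auto
      then have "KK t < KK s" using t unfolding S_def by (intro KK_mono) auto
      then have "KK t < aa" using s unfolding S_def by auto
      moreover have t1: "0 < t" "t < 1" using t d_hi by auto
      ultimately have "QQ t > 0" using QQ_eq by simp
      then show "sgn m1 = sgn m2" using reduction[OF t1 cc] PP_pos[OF t1] by (rule sign_same[rotated 2]) 
    }
    {
      assume t: "d < t \<and> t < 1"
      define s where "s = (d + t)/2"
      have s1: "d < s" "s < t" using t unfolding s_def by auto
      have "s \<notin> S" using s1 cSup_upper[OF _ bdd] unfolding d_def by force
      moreover have "0 < s" "s < 1" using s1 t d_lo by auto
      ultimately have "aa \<le> KK s" unfolding S_def by auto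
      moreover have "KK s < KK t" using s1 t \<open>0 < s\<close> by (intro KK_mono) auto
      moreover have t1: "0 < t" "t < 1" using t d_lo by auto
      ultimately have "QQ t < 0" using QQ_eq by simp
      then show "sgn m1 = - sgn m2" using reduction[OF t1 cc] PP_pos[OF t1] by (rule sign_opp[rotated 2])
    }
  qed
qed

end
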